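(* Let $V$ be a finite-dimensional real vector space with a non-degenerate inner product of signature $(p,q)$, $p,q\ge 1$, $p+q\ge 3$; let $Q(v)=(v,v)$, $\mathcal{N}=\{v:Q(v)=0\}$, and $\mathcal{I}=Q\cdot\mathbb{R}[V,\mathbb{R}]$. Let $W$ be a finite-dimensional real vector space of dimension $w$ and let $x_1,\dots,x_r\in\mathbb{R}[V,W]$ with $r\le w$. The following are equivalent: \begin{enumerate} \item the vectors $x_1(v),\dots,x_r(v)$ are linearly dependent for all $v\in\mathcal{N}$; \item $I(x_1,\dots,x_r)\subset\mathcal{I}$; \item there exist $c_1,\dots,c_r\in\mathbb{R}[V,\mathbb{R}]$, with $c_i\notin\mathcal{I}$ for at least one $i$, such that $c_1x_1+\dots+c_rx_r\in\mathcal{I}\,\mathbb{R}[V,W]$, i.e. $c_1x_1+\dots+c_rx_r=Q\cdot y$ for some $y\in\mathbb{R}[V,W]$. \end{enumerate}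
   Context: $\mathbb{R}[V,\mathbb{R}]$ is the ring of real polynomial functions on $V$ and $\mathbb{R}[V,W]$ the $\mathbb{R}[V,\mathbb{R}]$-module of polynomial maps $V\to W$. For a basis of $W$, let $\mathbf{X}$ be the $w\times r$ matrix over $\mathbb{R}[V,\mathbb{R}]$ whose $i$-th column is the coordinate vector of $x_i$; $I(x_1,\dots,x_r)$ is the ideal generated by all $r\times r$ minors of $\mathbf{X}$ (independent of the basis). *)

theory Defs
  imports "HOL-Analysis.Analysis"
begin

inductive_set poly_fun :: "('v::real_vector \<Rightarrow> real) set" where
  const: "(\<lambda>v. c) \<in> poly_fun"
| lin: "linear f \<Longrightarrow> f \<in> poly_fun"
| add: "f \<in> poly_fun \<Longrightarrow> g \<in> poly_fun \<Longrightarrow> (\<lambda>v. f v + g v) \<in> poly_fun"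
| mult: "f \<in> poly_fun \<Longrightarrow> g \<in> poly_fun \<Longrightarrow> (\<lambda>v. f v * g v) \<in> poly_fun"

definition poly_map :: "('v::real_vector \<Rightarrow> 'w::euclidean_space) \<Rightarrow> bool" where
  "poly_map f \<longleftrightarrow> (\<forall>b\<in>Basis. (\<lambda>v. f v \<bullet> b) \<in> poly_fun)"

definition has_signature :: "('v::euclidean_space \<Rightarrow> 'v \<Rightarrow> real) \<Rightarrow> nat \<Rightarrow> nat \<Rightarrow> bool" where
  "has_signature B p q \<longleftrightarrow> bilinear B \<and> (\<forall>u v. B u v = B v u) \<and> p + q = DIM('v) \<and>
     (\<exists>e::nat \<Rightarrow> 'v. independent (e ` {..<p+q}) \<and> inj_on e {..<p+q} \<and>
        (\<forall>i<p+q. \<forall>j<p+q. i \<noteq> j \<longrightarrow> B (e i) (e j) = 0) \<and>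
        (\<forall>i<p. B (e i) (e i) = 1) \<and> (\<forall>i. p \<le> i \<and> i < p+q \<longrightarrow> B (e i) (e i) = -1))"

definition Q_ideal :: "('v::real_vector \<Rightarrow> real) \<Rightarrow> ('v \<Rightarrow> real) set" where
  "Q_ideal Q = {(\<lambda>v. Q v * g v) | g. g \<in> poly_fun}"

definition row_sels :: "nat \<Rightarrow> 'w::euclidean_space list set" where
  "row_sels r = {bs. length bs = r \<and> distinct bs \<and> set bs \<subseteq> Basis}"

text \<open>The r \<times> r minor of the matrix X (columns = coordinate vectors of x_0..x_{r-1})
  obtained from the rows bs (Leibniz formula).\<close>
definition minor :: "nat \<Rightarrow> (nat \<Rightarrow> 'v \<Rightarrow> 'w::euclidean_space) \<Rightarrow> 'w list \<Rightarrow> 'v \<Rightarrow> real" where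
  "minor r x bs v = (\<Sum>p | p permutes {..<r}. of_int (sign p) * (\<Prod>i<r. x (p i) v \<bullet> bs ! i))"

definition minors_ideal :: "nat \<Rightarrow> (nat \<Rightarrow> 'v::real_vector \<Rightarrow> 'w::euclidean_space) \<Rightarrow> ('v \<Rightarrow> real) set" where
  "minors_ideal r x = {(\<lambda>v. \<Sum>bs\<in>row_sels r. c bs v * minor r x bs v) | c.
        \<forall>bs\<in>row_sels r. c bs \<in> poly_fun}"

end

theory Submission
  imports Defs "Jordan_Normal_Form.Determinant" "HOL-Library.Function_Algebras"
begin

section \<open>Closure properties of polynomial functions\<close>

lemma pf_const[intro]: "(\<lambda>v. c) \<in> poly_fun"
  by (rule poly_fun.const)

lemma pf_add[intro]: "f \<in> poly_fun \<Longrightarrow> g \<in> poly_fun \<Longrightarrow> (\<lambda>v. f v + g v) \<in> poly_fun"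
  by (rule poly_fun.add)

lemma pf_mult[intro]: "f \<in> poly_fun \<Longrightarrow> g \<in> poly_fun \<Longrightarrow> (\<lambda>v. f v * g v) \<in> poly_fun"
  by (rule poly_fun.mult)

lemma pf_lin[intro]: "linear f \<Longrightarrow> f \<in> poly_fun"
  by (rule poly_fun.lin)

lemma pf_cmult[intro]: "f \<in> poly_fun \<Longrightarrow> (\<lambda>v. c * f v) \<in> poly_fun"
  using pf_mult[OF pf_const] by blast

lemma pf_neg[intro]: "f \<in> poly_fun \<Longrightarrow> (\<lambda>v. - f v) \<in> poly_fun"
  using pf_cmult[of f "-1"] by simp

lemma pf_diff[intro]: "f \<in> poly_fun \<Longrightarrow> g \<in> poly_fun \<Longrightarrow> (\<lambda>v. f v - g v) \<in> poly_fun"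
  using pf_add[OF _ pf_neg, of f g] by simp

lemma pf_sum[intro]:
  assumes "finite S" "\<And>i. i \<in> S \<Longrightarrow> f i \<in> poly_fun"
  shows "(\<lambda>v. \<Sum>i\<in>S. f i v) \<in> poly_fun"
  using assms by (induction S rule: finite_induct) auto

lemma pf_prod[intro]:
  assumes "finite S" "\<And>i. i \<in> S \<Longrightarrow> f i \<in> poly_fun"
  shows "(\<lambda>v. \<Prod>i\<in>S. f i v) \<in> poly_fun"
  using assms by (induction S rule: finite_induct) auto

lemma pf_power[intro]: "f \<in> poly_fun \<Longrightarrow> (\<lambda>v. f v ^ n) \<in> poly_fun"
  by (induction n) auto

lemma pf_compose:
  assumes "f \<in> poly_fun" "linear L"
  shows "(\<lambda>v. f (L v)) \<in> poly_fun"
  using assms(1)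
proof (induction rule: poly_fun.induct)
  case (lin f)
  then show ?case using linear_compose[OF assms(2) lin] by (auto simp: o_def)
qed auto

lemma pf_line:
  assumes "f \<in> poly_fun"
  shows "\<exists>P. \<forall>t. f (v0 + t *\<^sub>R d) = poly P t"
  using assms
proof (induction rule: poly_fun.induct)
  case (const c)
  show ?case by (rule exI[of _ "[:c:]"]) simp
next
  case (lin f)
  show ?case
    by (rule exI[of _ "[:f v0, f d:]"])
      (simp add: linear_add[OF lin] linear_scale[OF lin])
next
  case (add f g)
  then obtain P1 P2 where "\<forall>t. f (v0 + t *\<^sub>R d) = poly P1 t" "\<forall>t. g (v0 + t *\<^sub>R d) = poly P2 t"
    by blast
  then show ?case by (intro exI[of _ "P1 + P2"]) simp
next
  case (mult f g)
  then obtain P1 P2 where "\<forall>t. f (v0 + t *\<^sub>R d) = poly P1 t" "\<forall>t. g (v0 + t *\<^sub>R d) = poly P2 t"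
    by blast
  then show ?case by (intro exI[of _ "P1 * P2"]) simp
qed

lemma pf_domain:
  assumes "f \<in> poly_fun" "g \<in> poly_fun" "\<And>v. f v * g v = 0"
  shows "(\<forall>v. f v = 0) \<or> (\<forall>v. g v = 0)"
proof (rule ccontr)
  assume "\<not> ?thesis"
  then obtain v1 v2 where v1: "f v1 \<noteq> 0" and v2: "g v2 \<noteq> 0" by blast
  obtain P1 where P1: "\<forall>t. f (v1 + t *\<^sub>R (v2 - v1)) = poly P1 t"
    using pf_line[OF assms(1)] by blast
  obtain P2 where P2: "\<forall>t. g (v1 + t *\<^sub>R (v2 - v1)) = poly P2 t"
    using pf_line[OF assms(2)] by blast
  have "\<forall>t. poly (P1 * P2) t = 0" using P1 P2 assms(3) by (metis poly_mult)
  then have "P1 * P2 = 0" using poly_all_0_iff_0 by blast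
  then have "P1 = 0 \<or> P2 = 0" by simp
  moreover have "poly P1 0 \<noteq> 0" using P1[rule_format, of 0] v1 by simp
  moreover have "poly P2 1 \<noteq> 0" using P2[rule_format, of 1] v2 by simp
  ultimately show False by auto
qed

lemma lin_proj:
  assumes "linear l"
  shows "linear (\<lambda>v. v - l v *\<^sub>R w0)"
  unfolding linear_iff
  by (auto simp: linear_add[OF assms] linear_scale[OF assms] algebra_simps)

lemma pf_split:
  assumes "f \<in> poly_fun" "linear l" "l w0 = 1"
  shows "\<exists>f'\<in>poly_fun. \<forall>v. f v = f (v - l v *\<^sub>R w0) + l v * f' v"
  using assms(1)
proof (induction rule: poly_fun.induct)
  case (const c)
  show ?case by (rule bexI[of _ "\<lambda>v. 0"]) auto
next
  case (lin f)
  have "\<forall>v. f v = f (v - l v *\<^sub>R w0) + l v * f w0"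
    by (simp add: linear_diff[OF lin] linear_scale[OF lin])
  then show ?case by (intro bexI[of _ "\<lambda>v. f w0"] pf_const)
next
  case (add f g)
  then obtain f' g' where fg: "f' \<in> poly_fun" "g' \<in> poly_fun"
    "\<forall>v. f v = f (v - l v *\<^sub>R w0) + l v * f' v" "\<forall>v. g v = g (v - l v *\<^sub>R w0) + l v * g' v"
    by blast
  show ?case
  proof (intro bexI[of _ "\<lambda>v. f' v + g' v"] allI)
    fix v
    have e1: "f v = f (v - l v *\<^sub>R w0) + l v * f' v" and e2: "g v = g (v - l v *\<^sub>R w0) + l v * g' v"
        using fg(3,4) by blast+
      show "f v + g v = f (v - l v *\<^sub>R w0) + g (v - l v *\<^sub>R w0) + l v * (f' v + g' v)"
        using e1 e2 by (simp add: distrib_left)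
  qed (rule pf_add[OF fg(1,2)])
next
  case (mult f g)
  then obtain f' g' where fg: "f' \<in> poly_fun" "g' \<in> poly_fun"
    "\<forall>v. f v = f (v - l v *\<^sub>R w0) + l v * f' v" "\<forall>v. g v = g (v - l v *\<^sub>R w0) + l v * g' v"
    by blast
  let ?\<pi> = "\<lambda>v. v - l v *\<^sub>R w0"
  have lp: "linear ?\<pi>" by (rule lin_proj[OF assms(2)])
  show ?case
  proof (intro bexI[of _ "\<lambda>v. f (?\<pi> v) * g' v + f' v * g (?\<pi> v) + l v * f' v * g' v"] allI)
    fix v
    have e1: "f v = f (?\<pi> v) + l v * f' v" and e2: "g v = g (?\<pi> v) + l v * g' v"
      using fg(3,4) by blast+
    then show "f v * g v = f (?\<pi> v) * g (?\<pi> v) +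
       l v * (f (?\<pi> v) * g' v + f' v * g (?\<pi> v) + l v * f' v * g' v)"
      by (simp add: algebra_simps)
  next
    show "(\<lambda>v. f (?\<pi> v) * g' v + f' v * g (?\<pi> v) + l v * f' v * g' v) \<in> poly_fun"
      by (intro pf_add pf_mult pf_compose[OF _ lp] pf_lin[OF assms(2)] fg(1,2) mult.hyps)
  qed
qed

section \<open>The quadric: division and primality\<close>

lemma Q_idealI: "g \<in> poly_fun \<Longrightarrow> (\<And>v. f v = Q v * g v) \<Longrightarrow> f \<in> Q_ideal Q"
  unfolding Q_ideal_def by (rule CollectI, rule exI[of _ g]) (auto intro: ext)

lemma Q_idealE: "f \<in> Q_ideal Q \<Longrightarrow> (\<And>g. g \<in> poly_fun \<Longrightarrow> (\<And>v. f v = Q v * g v) \<Longrightarrow> P) \<Longrightarrow> P"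
  unfolding Q_ideal_def by auto

locale quad =
  fixes Q a b :: "'v::euclidean_space \<Rightarrow> real" and u w0 z0 :: 'v
  assumes Qpf: "Q \<in> poly_fun" and la: "linear a" and lb: "linear b"
    and au: "a u = 1" and bu: "b u = 0"
    and Rinv: "\<And>v t. Q (v + t *\<^sub>R u) - a (v + t *\<^sub>R u) * b (v + t *\<^sub>R u) = Q v - a v * b v"
    and bw0: "b w0 = 1" and bz0: "b z0 = 0" and Qz0: "Q z0 \<noteq> 0"
begin

lemma binv: "b (v + t *\<^sub>R u) = b v"
  using bu by (simp add: linear_add[OF lb] linear_scale[OF lb])

lemma ainv: "a (v + t *\<^sub>R u) = a v + t"
  using au by (simp add: linear_add[OF la] linear_scale[OF la])

lemma Rpf: "(\<lambda>v. Q v - a v * b v) \<in> poly_fun"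
  by (intro pf_diff pf_mult Qpf pf_lin la lb)

lemma pd:
  assumes "f \<in> poly_fun"
  shows "\<exists>d g h. g \<in> poly_fun \<and> h \<in> poly_fun \<and> (\<forall>v t. h (v + t *\<^sub>R u) = h v) \<and>
     (\<forall>v. b v ^ d * f v = Q v * g v + h v)"
  using assms
proof (induction rule: poly_fun.induct)
  case (const c)
  show ?case by (rule exI[of _ 0], rule exI[of _ "\<lambda>v. 0"], rule exI[of _ "\<lambda>v. c"]) auto
next
  case (lin f)
  let ?\<pi> = "\<lambda>v. v - a v *\<^sub>R u"
  have lp: "linear ?\<pi>" by (rule lin_proj[OF la])
  have pinv: "?\<pi> (v + t *\<^sub>R u) = ?\<pi> v" for v t
    using ainv[of v t] by (simp add: algebra_simps)
  have fv: "f v = f (?\<pi> v) + a v * f u" for v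
    by (simp add: linear_diff[OF lin] linear_scale[OF lin])
  let ?h = "\<lambda>v. b v * f (?\<pi> v) - (Q v - a v * b v) * f u"
  have H1: "?h \<in> poly_fun"
    by (intro pf_diff pf_mult pf_lin[OF lb] pf_compose[OF pf_lin[OF lin] lp] Rpf pf_const)
  have H2: "\<forall>v t. ?h (v + t *\<^sub>R u) = ?h v"
  proof (intro allI)
    fix v t
    have R': "Q (v + t *\<^sub>R u) - a (v + t *\<^sub>R u) * b v = Q v - a v * b v"
      using Rinv[of v t] binv[of v t] by simp
    show "?h (v + t *\<^sub>R u) = ?h v" unfolding binv pinv R' ..
  qed
  have H3: "\<forall>v. b v ^ 1 * f v = Q v * f u + ?h v"
  proof
    fix v
    show "b v ^ 1 * f v = Q v * f u + ?h v"
      using fv[of v] by (simp add: algebra_simps)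
  qed
  show ?case
    by (rule exI[of _ 1], rule exI[of _ "\<lambda>v. f u"], rule exI[of _ ?h]) (intro conjI pf_const H1 H2 H3)
next
  case (add f1 f2)
  then obtain d1 g1 h1 d2 g2 h2 where A: "g1 \<in> poly_fun" "h1 \<in> poly_fun" "\<forall>v t. h1 (v + t *\<^sub>R u) = h1 v"
    "\<forall>v. b v ^ d1 * f1 v = Q v * g1 v + h1 v"
    "g2 \<in> poly_fun" "h2 \<in> poly_fun" "\<forall>v t. h2 (v + t *\<^sub>R u) = h2 v"
    "\<forall>v. b v ^ d2 * f2 v = Q v * g2 v + h2 v" by blast
  let ?g = "\<lambda>v. b v ^ d2 * g1 v + b v ^ d1 * g2 v"
  let ?h = "\<lambda>v. b v ^ d2 * h1 v + b v ^ d1 * h2 v"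
  have E: "\<forall>v. b v ^ (d1 + d2) * (f1 v + f2 v) = Q v * ?g v + ?h v"
  proof
    fix v
    have "b v ^ (d1 + d2) * (f1 v + f2 v) = b v ^ d2 * (b v ^ d1 * f1 v) + b v ^ d1 * (b v ^ d2 * f2 v)"
      by (simp add: power_add algebra_simps)
    also have "\<dots> = b v ^ d2 * (Q v * g1 v + h1 v) + b v ^ d1 * (Q v * g2 v + h2 v)"
      using A by simp
    finally show "b v ^ (d1 + d2) * (f1 v + f2 v) = Q v * ?g v + ?h v"
      by (simp add: algebra_simps)
  qed
  have I: "\<forall>v t. ?h (v + t *\<^sub>R u) = ?h v" using A binv by simp
  have G: "?g \<in> poly_fun" "?h \<in> poly_fun"
    by (intro pf_add pf_mult pf_power pf_lin[OF lb] A(1,2,5,6))+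
  show ?case
    by (rule exI[of _ "d1 + d2"], rule exI[of _ ?g], rule exI[of _ ?h]) (intro conjI G I E)
next
  case (mult f1 f2)
  then obtain d1 g1 h1 d2 g2 h2 where A: "g1 \<in> poly_fun" "h1 \<in> poly_fun" "\<forall>v t. h1 (v + t *\<^sub>R u) = h1 v"
    "\<forall>v. b v ^ d1 * f1 v = Q v * g1 v + h1 v"
    "g2 \<in> poly_fun" "h2 \<in> poly_fun" "\<forall>v t. h2 (v + t *\<^sub>R u) = h2 v"
    "\<forall>v. b v ^ d2 * f2 v = Q v * g2 v + h2 v" by blast
  let ?g = "\<lambda>v. g1 v * Q v * g2 v + g1 v * h2 v + h1 v * g2 v"
  let ?h = "\<lambda>v. h1 v * h2 v"
  have E: "\<forall>v. b v ^ (d1 + d2) * (f1 v * f2 v) = Q v * ?g v + ?h v"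
  proof
    fix v
    have "b v ^ (d1 + d2) * (f1 v * f2 v) = (b v ^ d1 * f1 v) * (b v ^ d2 * f2 v)"
      by (simp add: power_add algebra_simps)
    also have "\<dots> = (Q v * g1 v + h1 v) * (Q v * g2 v + h2 v)"
      using A by simp
    finally show "b v ^ (d1 + d2) * (f1 v * f2 v) = Q v * ?g v + ?h v"
      by (simp add: algebra_simps)
  qed
  have I: "\<forall>v t. ?h (v + t *\<^sub>R u) = ?h v" using A by simp
  have G: "?g \<in> poly_fun" "?h \<in> poly_fun"
    by (intro pf_add pf_mult Qpf A(1,2,5,6))+
  show ?case
    by (rule exI[of _ "d1 + d2"], rule exI[of _ ?g], rule exI[of _ ?h]) (intro conjI G I E)
qed

definition mv :: "'v \<Rightarrow> 'v" where "mv v = v + (- Q v / b v) *\<^sub>R u"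

lemma mv: assumes "b v \<noteq> 0" shows "Q (mv v) = 0" "b (mv v) = b v"
proof -
  show "b (mv v) = b v" unfolding mv_def by (rule binv)
  have "Q (mv v) = (Q v - a v * b v) + a (mv v) * b (mv v)"
    using Rinv[of v "- Q v / b v"] unfolding mv_def by (simp add: algebra_simps)
  also have "\<dots> = 0" using assms unfolding mv_def binv ainv by (simp add: field_simps)
  finally show "Q (mv v) = 0" .
qed

lemma pd_mv:
  assumes "f \<in> poly_fun"
  shows "\<exists>g h d. g \<in> poly_fun \<and> h \<in> poly_fun \<and> (\<forall>v. b v ^ d * f v = Q v * g v + h v) \<and>
     (\<forall>v. b v \<noteq> 0 \<longrightarrow> h v = b v ^ d * f (mv v))"
proof -
  obtain d g h where A: "g \<in> poly_fun" "h \<in> poly_fun" "\<forall>v t. h (v + t *\<^sub>R u) = h v"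
     "\<forall>v. b v ^ d * f v = Q v * g v + h v" using pd[OF assms] by blast
  have "\<forall>v. b v \<noteq> 0 \<longrightarrow> h v = b v ^ d * f (mv v)"
  proof (intro allI impI)
    fix v assume that: "b v \<noteq> 0"
    have "h v = h (mv v)" unfolding mv_def by (rule A(3)[rule_format, symmetric])
    also have "\<dots> = b (mv v) ^ d * f (mv v) - Q (mv v) * g (mv v)" using A(4) by simp
    also have "\<dots> = b v ^ d * f (mv v)" using mv[OF that] by simp
    finally show "h v = b v ^ d * f (mv v)" .
  qed
  then show ?thesis using A by blast
qed

lemma b_nz: "\<not> (\<forall>v. b v = 0)" using bw0 by (metis one_neq_zero)

lemma cancel:
  assumes "f \<in> poly_fun" "g \<in> poly_fun" "\<forall>v. b v ^ d * f v = Q v * g v"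
  shows "f \<in> Q_ideal Q"
  using assms(2,3)
proof (induction d arbitrary: g)
  case 0
  then show ?case by (intro Q_idealI[of g]) auto
next
  case (Suc d)
  let ?\<pi> = "\<lambda>v. v - b v *\<^sub>R w0"
  have lp: "linear ?\<pi>" by (rule lin_proj[OF lb])
  have bp: "b (?\<pi> v) = 0" for v using bw0 by (simp add: linear_diff[OF lb] linear_scale[OF lb])
  have "Q (?\<pi> v) * g (?\<pi> v) = 0" for v
    using Suc.prems(2)[rule_format, of "?\<pi> v"] bp[of v] by simp
  from pf_domain[OF pf_compose[OF Qpf lp] pf_compose[OF Suc.prems(1) lp] this]
  moreover have "Q (?\<pi> z0) \<noteq> 0" using Qz0 bz0 by simp
  ultimately have g0: "\<forall>v. g (?\<pi> v) = 0" by blast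
  obtain g' where g': "g' \<in> poly_fun" "\<forall>v. g v = g (?\<pi> v) + b v * g' v"
    using pf_split[OF Suc.prems(1) lb bw0] by blast
  have "b v * (b v ^ d * f v - Q v * g' v) = 0" for v
    using Suc.prems(2)[rule_format, of v] g'(2)[rule_format, of v] g0 by (simp add: algebra_simps)
  moreover have "(\<lambda>v. b v ^ d * f v - Q v * g' v) \<in> poly_fun"
    by (intro pf_diff pf_mult pf_power pf_lin[OF lb] assms(1) Qpf g'(1))
  ultimately have "\<forall>v. b v ^ d * f v - Q v * g' v = 0"
    using pf_domain[OF pf_lin[OF lb]] b_nz by blast
  then show ?case using Suc.IH[OF g'(1)] by simp
qed

lemma vanish:
  assumes "f \<in> poly_fun" "\<forall>v. Q v = 0 \<longrightarrow> f v = 0"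
  shows "f \<in> Q_ideal Q"
proof -
  obtain g h d where A: "g \<in> poly_fun" "h \<in> poly_fun" "\<forall>v. b v ^ d * f v = Q v * g v + h v"
     "\<forall>v. b v \<noteq> 0 \<longrightarrow> h v = b v ^ d * f (mv v)" using pd_mv[OF assms(1)] by blast
  have "b v * h v = 0" for v
  proof (cases "b v = 0")
    case False
    have "f (mv v) = 0" using assms(2) mv(1)[OF False] by blast
    then show ?thesis using A(4)[rule_format, OF False] by simp
  qed simp
  then have "(\<forall>v. b v = 0) \<or> (\<forall>v. h v = 0)" by (intro pf_domain[OF pf_lin[OF lb] A(2)])
  with b_nz have h0: "\<forall>v. h v = 0" by blast
  have "\<forall>v. b v ^ d * f v = Q v * g v"
  proof
    fix v show "b v ^ d * f v = Q v * g v" using A(3) h0 by simp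
  qed
  then show ?thesis by (rule cancel[OF assms(1) A(1)])
qed

lemma prime:
  assumes "f \<in> poly_fun" "g \<in> poly_fun" "\<forall>v. Q v = 0 \<longrightarrow> f v * g v = 0"
  shows "f \<in> Q_ideal Q \<or> g \<in> Q_ideal Q"
proof -
  obtain g1 h1 d1 where A: "g1 \<in> poly_fun" "h1 \<in> poly_fun" "\<forall>v. b v ^ d1 * f v = Q v * g1 v + h1 v"
     "\<forall>v. b v \<noteq> 0 \<longrightarrow> h1 v = b v ^ d1 * f (mv v)" using pd_mv[OF assms(1)] by blast
  obtain g2 h2 d2 where B: "g2 \<in> poly_fun" "h2 \<in> poly_fun" "\<forall>v. b v ^ d2 * g v = Q v * g2 v + h2 v"
     "\<forall>v. b v \<noteq> 0 \<longrightarrow> h2 v = b v ^ d2 * g (mv v)" using pd_mv[OF assms(2)] by blast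
  have "b v * (h1 v * h2 v) = 0" for v
  proof (cases "b v = 0")
    case False
    have "f (mv v) * g (mv v) = 0" using mv(1)[OF False] assms(3) by blast
    then have "(b v ^ d1 * f (mv v)) * (b v ^ d2 * g (mv v)) = 0" by auto
    then show ?thesis unfolding A(4)[rule_format, OF False, symmetric] B(4)[rule_format, OF False, symmetric] by simp
  qed simp
  then have "(\<forall>v. b v = 0) \<or> (\<forall>v. h1 v * h2 v = 0)"
    by (intro pf_domain[OF pf_lin[OF lb] pf_mult[OF A(2) B(2)]])
  with b_nz have "\<forall>v. h1 v * h2 v = 0" by blast
  then have "(\<forall>v. h1 v = 0) \<or> (\<forall>v. h2 v = 0)" by (intro pf_domain[OF A(2) B(2)]) blast
  then show ?thesis
  proof
    assume h0: "\<forall>v. h1 v = 0"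
    have "\<forall>v. b v ^ d1 * f v = Q v * g1 v"
    proof
      fix v show "b v ^ d1 * f v = Q v * g1 v" using A(3) h0 by simp
    qed
    then show ?thesis using cancel[OF assms(1) A(1)] by blast
  next
    assume h0: "\<forall>v. h2 v = 0"
    have "\<forall>v. b v ^ d2 * g v = Q v * g2 v"
    proof
      fix v show "b v ^ d2 * g v = Q v * g2 v" using B(3) h0 by simp
    qed
    then show ?thesis using cancel[OF assms(2) B(1)] by blast
  qed
qed

end

section \<open>Minors and Laplace expansion\<close>

definition subm :: "'a mat \<Rightarrow> nat list \<Rightarrow> nat list \<Rightarrow> 'a mat" where
  "subm A rs cs = mat (length rs) (length cs) (\<lambda>(i,j). A $$ (rs ! i, cs ! j))"

lemma subm_carrier[simp]: "subm A rs cs \<in> carrier_mat (length rs) (length cs)"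
  unfolding subm_def by simp

lemma subm_dim[simp]: "dim_row (subm A rs cs) = length rs" "dim_col (subm A rs cs) = length cs"
  unfolding subm_def by simp_all

lemma subm_index[simp]: "i < length rs \<Longrightarrow> j < length cs \<Longrightarrow> subm A rs cs $$ (i,j) = A $$ (rs ! i, cs ! j)"
  unfolding subm_def by simp

lemma det_permute_cols:
  assumes M: "M \<in> carrier_mat n n" and p: "p permutes {0..<n}"
  shows "det (mat n n (\<lambda>(i,j). M $$ (i, p j))) = signof p * det M"
proof -
  have "mat n n (\<lambda>(i,j). M $$ (i, p j)) = transpose_mat (mat n n (\<lambda>(i,j). transpose_mat M $$ (p i, j)))"
    using M permutes_in_image[OF p] by (intro eq_matI) auto
  then have "det (mat n n (\<lambda>(i,j). M $$ (i, p j))) = det (mat n n (\<lambda>(i,j). transpose_mat M $$ (p i, j)))"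
    using det_transpose[of "mat n n (\<lambda>(i,j). transpose_mat M $$ (p i, j))" n] by simp
  also have "\<dots> = signof p * det (transpose_mat M)"
    by (rule det_permute_rows[OF _ p]) (use M in simp)
  also have "\<dots> = signof p * det M" using det_transpose[OF M] by simp
  finally show ?thesis .
qed

lemma sum_closed:
  assumes "0 \<in> S" "\<And>x y. x \<in> S \<Longrightarrow> y \<in> S \<Longrightarrow> x + y \<in> S" "\<And>i. i \<in> F \<Longrightarrow> f i \<in> S"
  shows "sum f F \<in> S"
proof (cases "finite F")
  case True
  then show ?thesis using assms(3) by (induction F rule: finite_induct) (auto intro: assms(1,2))
qed (simp add: assms(1))

lemma prod_closed:
  assumes "1 \<in> S" "\<And>x y. x \<in> S \<Longrightarrow> y \<in> S \<Longrightarrow> x * y \<in> S" "\<And>i. i \<in> F \<Longrightarrow> f i \<in> S"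
  shows "prod f F \<in> S"
proof (cases "finite F")
  case True
  then show ?thesis using assms(3) by (induction F rule: finite_induct) (auto intro: assms(1,2))
qed (simp add: assms(1))

lemma det_closed:
  fixes S :: "'a::comm_ring_1 set"
  assumes S0: "0 \<in> S" and S1: "1 \<in> S" and Sm1: "-1 \<in> S"
    and Sadd: "\<And>x y. x \<in> S \<Longrightarrow> y \<in> S \<Longrightarrow> x + y \<in> S"
    and Smul: "\<And>x y. x \<in> S \<Longrightarrow> y \<in> S \<Longrightarrow> x * y \<in> S"
    and M: "M \<in> carrier_mat n n" and ent: "\<And>i j. i < n \<Longrightarrow> j < n \<Longrightarrow> M $$ (i,j) \<in> S"
  shows "det M \<in> S"
proof -
  have "(signof p :: 'a) \<in> S" for p
    using S1 Sm1 by (cases "evenperm p") (auto simp: sign_def)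
  moreover have "(\<Prod>i = 0..<n. M $$ (i, p i)) \<in> S" if "p permutes {0..<n}" for p
    using permutes_in_image[OF that] by (intro prod_closed[OF S1 Smul] ent) auto
  ultimately show ?thesis unfolding det_def'[OF M]
    by (intro sum_closed[OF S0 Sadd] Smul) auto
qed

lemma distinct_perm_list:
  assumes "distinct cs" "length cs = r" "set cs \<subseteq> {..<r}"
  shows "set cs = {0..<r}"
proof -
  have "card (set cs) = r" using assms distinct_card by blast
  then show ?thesis using assms(3) by (metis atLeast0LessThan card_lessThan card_subset_eq finite_lessThan)
qed

lemma GL:
  fixes A :: "'a::comm_ring_1 mat" and P S :: "'a set"
  assumes A: "A \<in> carrier_mat w r" and rw: "r \<le> w"
    and P0: "0 \<in> P" and Padd: "\<And>x y. x \<in> P \<Longrightarrow> y \<in> P \<Longrightarrow> x + y \<in> P"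
    and Pmul: "\<And>x y. x \<in> P \<Longrightarrow> y * x \<in> P" and P1: "1 \<notin> P"
    and S0: "0 \<in> S" and S1: "1 \<in> S" and Sm1: "-1 \<in> S"
    and Sadd: "\<And>x y. x \<in> S \<Longrightarrow> y \<in> S \<Longrightarrow> x + y \<in> S"
    and Smul: "\<And>x y. x \<in> S \<Longrightarrow> y \<in> S \<Longrightarrow> x * y \<in> S"
    and ent: "\<And>i j. i < w \<Longrightarrow> j < r \<Longrightarrow> A $$ (i,j) \<in> S"
    and minors: "\<And>rs. distinct rs \<Longrightarrow> length rs = r \<Longrightarrow> set rs \<subseteq> {..<w} \<Longrightarrow> det (subm A rs [0..<r]) \<in> P"
  shows "\<exists>c. (\<forall>j<r. c j \<in> S) \<and> (\<exists>j<r. c j \<notin> P) \<and> (\<forall>i<w. (\<Sum>j<r. c j * A $$ (i,j)) \<in> P)"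
proof -
  define good where "good k \<longleftrightarrow> (\<exists>rs cs. distinct rs \<and> length rs = k \<and> set rs \<subseteq> {..<w} \<and>
     distinct cs \<and> length cs = k \<and> set cs \<subseteq> {..<r} \<and> det (subm A rs cs) \<notin> P)" for k
  have good0: "good 0" unfolding good_def
    by (rule exI[of _ "[]"], rule exI[of _ "[]"]) (simp add: P1 det_dim_zero[OF subm_carrier[of A "[]" "[]", simplified]])
  have goodle: "k \<le> r" if "good k" for k
  proof -
    from that obtain rs cs where H: "distinct cs" "length cs = k" "set cs \<subseteq> {..<r}"
      unfolding good_def by (elim exE conjE)
    have "card (set cs) = k" using distinct_card[OF H(1)] H(2) by simp
    moreover have "card (set cs) \<le> card {..<r}" by (rule card_mono[OF finite_lessThan H(3)])
    ultimately show ?thesis by simp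
  qed
  define k where "k = (GREATEST k. good k)"
  have gk: "good k" unfolding k_def using good0 goodle by (rule GreatestI_nat[of good 0 r])
  have kmax: "k' \<le> k" if "good k'" for k'
    unfolding k_def using that goodle by (rule Greatest_le_nat[of good k' r])
  from gk obtain rs cs where rs: "distinct rs" "length rs = k" "set rs \<subseteq> {..<w}"
    and cs: "distinct cs" "length cs = k" "set cs \<subseteq> {..<r}" and M: "det (subm A rs cs) \<notin> P"
    unfolding good_def by (elim exE conjE)
  have "k \<noteq> r"
  proof
    assume kr: "k = r"
    have setcs: "set cs = {0..<r}" using distinct_perm_list[OF cs(1) _ cs(3)] cs(2) kr by simp
    define p where "p j = (if j < r then cs ! j else j)" for j
    have "bij_betw p {0..<r} {0..<r}"
    proof (rule bij_betw_imageI)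
      show "inj_on p {0..<r}"
      proof (rule inj_onI)
        fix x y assume "x \<in> {0..<r}" "y \<in> {0..<r}" "p x = p y"
        then have "x < length cs" "y < length cs" "cs ! x = cs ! y" using cs(2) kr by (auto simp: p_def)
        then show "x = y" using nth_eq_iff_index_eq[OF cs(1)] by blast
      qed
      have "p ` {0..<r} = (\<lambda>j. cs ! j) ` {0..<length cs}" using cs(2) kr by (auto simp: p_def)
      also have "\<dots> = set cs" by (auto simp: set_conv_nth)
      finally show "p ` {0..<r} = {0..<r}" using setcs by simp
    qed
    then have pp: "p permutes {0..<r}" by (rule bij_imp_permutes) (simp add: p_def)
    have eqm: "subm A rs cs = mat r r (\<lambda>(i,j). subm A rs [0..<r] $$ (i, p j))"
    proof (rule eq_matI)
      fix i j assume "i < dim_row (mat r r (\<lambda>(i,j). subm A rs [0..<r] $$ (i, p j)))"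
        "j < dim_col (mat r r (\<lambda>(i,j). subm A rs [0..<r] $$ (i, p j)))"
      then have ij: "i < r" "j < r" by simp_all
      have "cs ! j \<in> set cs" using ij cs(2) kr by simp
      then have "p j < r" using cs(3) ij by (auto simp: p_def)
      then show "subm A rs cs $$ (i,j) = mat r r (\<lambda>(i,j). subm A rs [0..<r] $$ (i, p j)) $$ (i,j)"
        using ij rs(2) cs(2) kr by (simp add: p_def)
    qed (simp_all add: rs(2) cs(2) kr)
    have "det (subm A rs cs) = signof p * det (subm A rs [0..<r])"
      unfolding eqm by (rule det_permute_cols[OF _ pp]) (use rs(2) kr subm_carrier[of A rs "[0..<r]"] in simp)
    moreover have "det (subm A rs [0..<r]) \<in> P" using minors[OF rs(1) _ rs(3)] rs(2) kr by simp
    ultimately have "det (subm A rs cs) \<in> P" using Pmul by simp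
    then show False using M by simp
  qed
  then have kr: "k < r" using goodle[OF gk] by simp
  obtain j0 where j0: "j0 < r" "j0 \<notin> set cs"
  proof -
    have "card (set cs) = k" using distinct_card[OF cs(1)] cs(2) by simp
    then have "card (set cs) < card {..<r}" using kr by simp
    then have "\<not> {..<r} \<subseteq> set cs" by (meson card_mono finite_set leD)
    then show ?thesis using that by blast
  qed
  define cs' where "cs' = cs @ [j0]"
  have cs': "distinct cs'" "length cs' = Suc k" "set cs' \<subseteq> {..<r}"
    using cs j0 unfolding cs'_def by auto
  define N where "N i = subm A (rs @ [i]) cs'" for i
  have Nc: "N i \<in> carrier_mat (Suc k) (Suc k)" for i
    unfolding N_def using subm_carrier[of A "rs @ [i]" cs'] rs(2) cs'(2) by simp
  define D where "D m = mat k k (\<lambda>(a,bb). A $$ (rs ! a, cs' ! (if bb < m then bb else Suc bb)))" for m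
  define coef where "coef m = (-1)^(k+m) * det (D m)" for m
  have detN: "det (N i) \<in> P" if i: "i < w" for i
  proof (cases "i \<in> set rs")
    case True
    then obtain m where m: "m < k" "rs ! m = i" using rs(2) by (metis in_set_conv_nth)
    have "row (N i) m = row (N i) k"
      using m rs(2) cs'(2) Nc by (intro eq_vecI) (auto simp: N_def nth_append)
    then have "det (N i) = 0" using det_identical_rows[OF Nc, of m k] m by simp
    then show ?thesis using P0 by simp
  next
    case False
    show ?thesis
    proof (rule ccontr)
      assume "det (N i) \<notin> P"
      then have "good (Suc k)" unfolding good_def N_def
        using rs False i cs' by (intro exI[of _ "rs @ [i]"] exI[of _ cs']) auto
      then show False using kmax[of "Suc k"] by simp
    qed
  qed
  have lap: "det (N i) = (\<Sum>m<Suc k. coef m * A $$ (i, cs' ! m))" if i: "i < w" for i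
  proof -
    have "det (N i) = (\<Sum>m<Suc k. N i $$ (k, m) * cofactor (N i) k m)"
      by (rule laplace_expansion_row[OF Nc]) simp
    also have "\<dots> = (\<Sum>m<Suc k. coef m * A $$ (i, cs' ! m))"
    proof (rule sum.cong[OF refl])
      fix m assume "m \<in> {..<Suc k}"
      then have m: "m < Suc k" by simp
      have "mat_delete (N i) k m = D m"
        using rs(2) cs'(2) m unfolding D_def N_def mat_delete_def by (intro eq_matI) (auto simp: nth_append)
      then show "N i $$ (k, m) * cofactor (N i) k m = coef m * A $$ (i, cs' ! m)"
        unfolding cofactor_def coef_def N_def using rs(2) cs'(2) m by (simp add: nth_append)
    qed
    finally show ?thesis .
  qed
  define c where "c j = (\<Sum>m<Suc k. if cs' ! m = j then coef m else 0)" for j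
  have csum: "(\<Sum>j<r. c j * A $$ (i,j)) = (\<Sum>m<Suc k. coef m * A $$ (i, cs' ! m))" for i
  proof -
    have "(\<Sum>j<r. c j * A $$ (i,j)) = (\<Sum>j<r. \<Sum>m<Suc k. if cs' ! m = j then coef m * A $$ (i,j) else 0)"
      unfolding c_def sum_distrib_right by (intro sum.cong refl) auto
    also have "\<dots> = (\<Sum>m<Suc k. \<Sum>j<r. if cs' ! m = j then coef m * A $$ (i,j) else 0)"
      by (rule sum.swap)
    also have "\<dots> = (\<Sum>m<Suc k. coef m * A $$ (i, cs' ! m))"
    proof (rule sum.cong[OF refl])
      fix m assume "m \<in> {..<Suc k}"
      then have "cs' ! m < r" using cs' by (metis lessThan_iff nth_mem subsetD)
      then show "(\<Sum>j<r. if cs' ! m = j then coef m * A $$ (i,j) else 0) = coef m * A $$ (i, cs' ! m)"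
        by (simp add: sum.delta)
    qed
    finally show ?thesis .
  qed
  have cj0: "c j0 = coef k"
  proof -
    have "c j0 = (\<Sum>m<Suc k. if m = k then coef m else 0)"
      unfolding c_def
    proof (rule sum.cong[OF refl])
      fix m assume "m \<in> {..<Suc k}"
      then have m: "m < Suc k" by simp
      have "cs' ! m = j0 \<longleftrightarrow> m = k"
        using cs'(1,2) m unfolding cs'_def
        by (metis cs(2) length_append_singleton lessI nth_append_length nth_eq_iff_index_eq)
      then show "(if cs' ! m = j0 then coef m else 0) = (if m = k then coef m else 0)" by simp
    qed
    also have "\<dots> = coef k" by (simp add: sum.delta)
    finally show ?thesis .
  qed
  have "D k = subm A rs cs"
    using rs(2) cs(2) unfolding D_def cs'_def by (intro eq_matI) (auto simp: nth_append)
  then have "coef k = det (subm A rs cs)" unfolding coef_def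
    by (simp add: power_add[symmetric] mult_2[symmetric])
  then have c1: "c j0 \<notin> P" using cj0 M by simp
  have rsw: "rs ! i < w" if "i < k" for i
  proof -
    have "rs ! i \<in> set rs" using that rs(2) by simp
    then show ?thesis using rs(3) by auto
  qed
  have csr: "cs' ! j < r" if "j < Suc k" for j
  proof -
    have "cs' ! j \<in> set cs'" using that cs'(2) by simp
    then show ?thesis using cs'(3) by auto
  qed
  have cS: "c j \<in> S" for j
  proof -
    have "det (D m) \<in> S" for m
      unfolding D_def
      by (intro det_closed[OF S0 S1 Sm1 Sadd Smul]) (auto intro!: ent rsw csr)
    moreover have "(-1::'a)^n \<in> S" for n
    proof (induction n)
      case (Suc n)
      then show ?case using Smul[OF Sm1 Suc] by simp
    qed (simp add: S1)
    ultimately have "coef m \<in> S" for m unfolding coef_def using Smul by blast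
    then show ?thesis unfolding c_def by (intro sum_closed[OF S0 Sadd]) (auto intro: S0)
  qed
  show ?thesis
    using cS c1 j0(1) detN lap csum by (intro exI[of _ c]) auto
qed

no_notation scalar_prod (infix \<open>\<bullet>\<close> 70)

lemma eval_hom: "comm_ring_hom (\<lambda>f::'v \<Rightarrow> 'a::comm_ring_1. f v)"
  by unfold_locales auto

lemma det_eval: "det (M :: ('v \<Rightarrow> 'a::comm_ring_1) mat) v = det (map_mat (\<lambda>f. f v) M)"
  using comm_ring_hom.hom_det[OF eval_hom, of v M] by simp

lemma sum_eval: "(sum f A :: 'v \<Rightarrow> 'a::comm_ring_1) v = (\<Sum>i\<in>A. f i v)"
  using comm_monoid_add_hom.hom_sum[of "\<lambda>f::'v \<Rightarrow> 'a. f v"] eval_hom[of v]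
  by (metis comm_ring_hom.axioms(1) comm_semiring_hom.axioms(1) ring_hom.axioms(1) semiring_hom.axioms(1))

lemma minor_det: "minor r x bs v = det (mat r r (\<lambda>(i,j). inner (x j v) (bs ! i)))"
proof -
  have "det (mat r r (\<lambda>(i,j). inner (x j v) (bs ! i))) =
    (\<Sum>p\<in>{p. p permutes {0..<r}}. signof p * (\<Prod>i=0..<r. mat r r (\<lambda>(i,j). inner (x j v) (bs ! i)) $$ (i, p i)))"
    by (rule det_def') simp
  also have "\<dots> = (\<Sum>p\<in>{p. p permutes {..<r}}. of_int (sign p) * (\<Prod>i<r. inner (x (p i) v) (bs ! i)))"
  proof (rule sum.cong)
    show "{p. p permutes {0..<r}} = {p. p permutes {..<r}}" by (simp add: atLeast0LessThan)
  next
    fix p assume "p \<in> {p. p permutes {..<r}}"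
    then have pp: "p permutes {..<r}" by simp
    have "(\<Prod>i=0..<r. mat r r (\<lambda>(i,j). inner (x j v) (bs ! i)) $$ (i, p i)) = (\<Prod>i<r. inner (x (p i) v) (bs ! i))"
      unfolding atLeast0LessThan by (rule prod.cong[OF refl]) (use permutes_in_image[OF pp] in simp)
    then show "signof p * (\<Prod>i=0..<r. mat r r (\<lambda>(i,j). inner (x j v) (bs ! i)) $$ (i, p i)) =
       of_int (sign p) * (\<Prod>i<r. inner (x (p i) v) (bs ! i))" by simp
  qed
  finally show ?thesis unfolding minor_def by simp
qed

lemma minor_zero:
  assumes "\<exists>i<r. a i \<noteq> 0" "(\<Sum>i<r. a i *\<^sub>R x i v) = 0"
  shows "minor r x bs v = 0"
proof -
  let ?M = "mat r r (\<lambda>(i,j). inner (x j v) (bs ! i))"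
  have Mc: "?M \<in> carrier_mat r r" by simp
  have "\<exists>w. w \<in> carrier_vec r \<and> w \<noteq> 0\<^sub>v r \<and> ?M *\<^sub>v w = 0\<^sub>v r"
  proof (intro exI[of _ "vec r a"] conjI)
    show "vec r a \<in> carrier_vec r" by simp
    obtain i where i: "i < r" "a i \<noteq> 0" using assms(1) by blast
    show "vec r a \<noteq> 0\<^sub>v r"
    proof
      assume "vec r a = 0\<^sub>v r"
      then have "vec r a $ i = 0\<^sub>v r $ i" by simp
      then show False using i by simp
    qed
    show "?M *\<^sub>v vec r a = 0\<^sub>v r"
    proof (rule eq_vecI)
      fix i assume "i < dim_vec (0\<^sub>v r :: real vec)"
      then have i: "i < r" by simp
      have "(?M *\<^sub>v vec r a) $ i = (\<Sum>j\<in>{0..<r}. inner (x j v) (bs ! i) * a j)"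
        using i unfolding mult_mat_vec_def scalar_prod_def by simp
      also have "\<dots> = inner (\<Sum>j<r. a j *\<^sub>R x j v) (bs ! i)"
        unfolding inner_sum_left atLeast0LessThan by (simp add: mult.commute)
      also have "\<dots> = 0" using assms(2) by simp
      finally show "(?M *\<^sub>v vec r a) $ i = 0\<^sub>v r $ i" using i by simp
    qed simp
  qed
  then have "det ?M = 0" using det_0_iff_vec_prod_zero[OF Mc] by blast
  then show ?thesis using minor_det by metis
qed

lemma minor_pf:
  assumes "set bs \<subseteq> Basis" "length bs = r" "\<forall>i<r. poly_map (x i)"
  shows "minor r x bs \<in> poly_fun"
proof -
  have "(\<lambda>v. \<Sum>p | p permutes {..<r}. of_int (sign p) * (\<Prod>i<r. inner (x (p i) v) (bs ! i))) \<in> poly_fun"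
  proof (intro pf_sum pf_mult pf_const pf_prod)
    show "finite {p. p permutes {..<r}}" by (rule finite_permutations) simp
  next
    fix p i assume A: "p \<in> {p. p permutes {..<r}}" "i \<in> {..<r}"
    then have pp: "p permutes {..<r}" by simp
    have "p i < r" "i < r" using permutes_in_image[OF pp, of i] A(2) by auto
    then have "poly_map (x (p i))" "bs ! i \<in> Basis" using assms by auto
    then show "(\<lambda>v. inner (x (p i) v) (bs ! i)) \<in> poly_fun" unfolding poly_map_def by blast
  qed simp
  then show ?thesis unfolding minor_def[abs_def] .
qed

lemma row_sels_finite: "finite (row_sels r :: 'w::euclidean_space list set)"
proof -
  have "row_sels r \<subseteq> {xs. set xs \<subseteq> (Basis :: 'w set) \<and> length xs \<le> r}"
    unfolding row_sels_def by auto
  then show ?thesis using finite_lists_length_le[OF finite_Basis] finite_subset by blast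
qed

lemma minor_in_ideal:
  fixes x :: "nat \<Rightarrow> 'v::real_vector \<Rightarrow> 'w::euclidean_space"
  assumes "bs \<in> row_sels r"
  shows "minor r x bs \<in> minors_ideal r x"
proof -
  let ?c = "\<lambda>bs'. if bs' = bs then (\<lambda>v::'v. 1::real) else (\<lambda>v. 0)"
  have "(\<lambda>v. \<Sum>bs'\<in>row_sels r. ?c bs' v * minor r x bs' v) = minor r x bs"
  proof
    fix v
    show "(\<Sum>bs'\<in>row_sels r. ?c bs' v * minor r x bs' v) = minor r x bs v"
    proof -
      have "(\<Sum>bs'\<in>row_sels r. ?c bs' v * minor r x bs' v) =
         (\<Sum>bs'\<in>row_sels r. if bs' = bs then minor r x bs' v else 0)"
        by (intro sum.cong refl) simp
      also have "\<dots> = minor r x bs v"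
        by (subst sum.delta[OF row_sels_finite]) (simp add: assms)
      finally show ?thesis .
    qed
  qed
  moreover have "\<forall>bs'\<in>row_sels r. ?c bs' \<in> poly_fun" by auto
  ultimately show ?thesis unfolding minors_ideal_def
    by (intro CollectI exI[of _ ?c] conjI) auto
qed

lemma Q_ideal_comb:
  assumes "finite F" "\<And>i. i \<in> F \<Longrightarrow> c i \<in> poly_fun" "\<And>i. i \<in> F \<Longrightarrow> m i \<in> Q_ideal Q"
  shows "(\<lambda>v. \<Sum>i\<in>F. c i v * m i v) \<in> Q_ideal Q"
proof -
  have "\<forall>i\<in>F. \<exists>g. g \<in> poly_fun \<and> (\<forall>v. m i v = Q v * g v)"
    using assms(3) by (metis Q_idealE)
  from bchoice[OF this] obtain G where G: "\<forall>i\<in>F. G i \<in> poly_fun \<and> (\<forall>v. m i v = Q v * G i v)"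
    by (elim exE)
  show ?thesis
  proof (rule Q_idealI[of "\<lambda>v. \<Sum>i\<in>F. c i v * G i v"])
    show "(\<lambda>v. \<Sum>i\<in>F. c i v * G i v) \<in> poly_fun" using assms(1,2) G by (intro pf_sum pf_mult) auto
    fix v
    show "(\<Sum>i\<in>F. c i v * m i v) = Q v * (\<Sum>i\<in>F. c i v * G i v)"
      unfolding sum_distrib_left using G by (intro sum.cong refl) (simp add: algebra_simps)
  qed
qed

lemma Q_ideal_vanish: "f \<in> Q_ideal Q \<Longrightarrow> Q v = 0 \<Longrightarrow> f v = 0"
  by (erule Q_idealE) simp

no_notation scalar_prod (infix \<open>\<bullet>\<close> 70)

lemma fun_ring_simps:
  "(0::'v \<Rightarrow> real) = (\<lambda>v. 0)" "(1::'v \<Rightarrow> real) = (\<lambda>v. 1)" "(-1::'v \<Rightarrow> real) = (\<lambda>v. -1)"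
  "(f + g :: 'v \<Rightarrow> real) = (\<lambda>v. f v + g v)" "(f * g :: 'v \<Rightarrow> real) = (\<lambda>v. f v * g v)"
  by (auto intro!: ext)

lemma mone_pf: "- (\<lambda>v::'v::real_vector. 1::real) \<in> poly_fun"
proof -
  have "- (\<lambda>v::'v::real_vector. 1::real) = (\<lambda>v. -1)" by (rule ext) simp
  then show ?thesis by (simp add: pf_const)
qed

theorem lemma3p5:
  fixes B :: "'v::euclidean_space \<Rightarrow> 'v \<Rightarrow> real"
    and x :: "nat \<Rightarrow> 'v \<Rightarrow> 'w::euclidean_space"
    and p q r :: nat
  assumes sig: "has_signature B p q"
    and "p \<ge> 1" and "q \<ge> 1" and "p + q \<ge> 3"
    and "r \<le> DIM('w)"
    and polyx: "\<forall>i<r. poly_map (x i)"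
  defines "Q \<equiv> (\<lambda>v. B v v)"
  shows "((\<forall>v. Q v = 0 \<longrightarrow>
              (\<exists>a::nat \<Rightarrow> real. (\<exists>i<r. a i \<noteq> 0) \<and> (\<Sum>i<r. a i *\<^sub>R x i v) = 0))
          \<longleftrightarrow> minors_ideal r x \<subseteq> Q_ideal Q)
       \<and> (minors_ideal r x \<subseteq> Q_ideal Q
          \<longleftrightarrow> (\<exists>c::nat \<Rightarrow> 'v \<Rightarrow> real. (\<forall>i<r. c i \<in> poly_fun) \<and> (\<exists>i<r. c i \<notin> Q_ideal Q) \<and>
                 (\<exists>y::'v \<Rightarrow> 'w. poly_map y \<and>
                    (\<forall>v. (\<Sum>i<r. c i v *\<^sub>R x i v) = Q v *\<^sub>R y v))))"
proof -
  note p1 = \<open>p \<ge> 1\<close> and q1 = \<open>q \<ge> 1\<close> and pq3 = \<open>p + q \<ge> 3\<close> and rw = \<open>r \<le> DIM('w)\<close>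
  from sig obtain e :: "nat \<Rightarrow> 'v" where bil: "bilinear B" and sym: "\<forall>u v. B u v = B v u"
    and orth: "\<forall>i<p+q. \<forall>j<p+q. i \<noteq> j \<longrightarrow> B (e i) (e j) = 0"
    and pos: "\<forall>i<p. B (e i) (e i) = 1" and neg: "\<forall>i. p \<le> i \<and> i < p+q \<longrightarrow> B (e i) (e i) = -1"
    unfolding has_signature_def by (elim conjE exE)
  define \<alpha> where "\<alpha> = e 0"
  define \<beta> where "\<beta> = e (p+q-1)"
  define \<gamma> where "\<gamma> = e 1"
  have Baa: "B \<alpha> \<alpha> = 1" unfolding \<alpha>_def using pos p1 by simp
  have Bbb: "B \<beta> \<beta> = -1" unfolding \<beta>_def using neg p1 q1 by simp
  have Bab: "B \<alpha> \<beta> = 0" unfolding \<alpha>_def \<beta>_def using orth[rule_format, of 0 "p+q-1"] pq3 p1 by auto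
  have Bba: "B \<beta> \<alpha> = 0" using Bab sym by metis
  have Bga: "B \<gamma> \<alpha> = 0" unfolding \<alpha>_def \<gamma>_def using orth[rule_format, of 1 0] pq3 p1 by auto
  have Bgb: "B \<gamma> \<beta> = 0" unfolding \<beta>_def \<gamma>_def using orth[rule_format, of 1 "p+q-1"] pq3 p1 by auto
  have Bgg: "B \<gamma> \<gamma> \<noteq> 0"
  proof (cases "1 < p")
    case True then show ?thesis unfolding \<gamma>_def using pos by simp
  next
    case False then show ?thesis unfolding \<gamma>_def using neg pq3 p1 by simp
  qed
  define a where "a v = B v \<alpha> - B v \<beta>" for v
  define b where "b v = B v \<alpha> + B v \<beta>" for v
  define u where "u = (1/2) *\<^sub>R (\<alpha> + \<beta>)"
  have la: "linear a" unfolding linear_iff a_def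
    by (simp add: bilinear_ladd[OF bil] bilinear_lmul[OF bil] algebra_simps)
  have lb: "linear b" unfolding linear_iff b_def
    by (simp add: bilinear_ladd[OF bil] bilinear_lmul[OF bil] algebra_simps)
  have Bvu: "B v u = b v / 2" for v
    unfolding u_def b_def by (simp add: bilinear_radd[OF bil] bilinear_rmul[OF bil])
  have Buv: "B u v = b v / 2" for v using Bvu sym by metis
  have bu: "b u = 0" unfolding b_def using Bvu[of \<alpha>] Bvu[of \<beta>] sym
    unfolding b_def by (simp add: Baa Bbb Bab Bba)
  have Buu: "B u u = 0" using Bvu[of u] bu by simp
  have au: "a u = 1" unfolding a_def using Buv[of \<alpha>] Buv[of \<beta>] unfolding b_def
    by (simp add: Baa Bbb Bab Bba sym)
  have Qexp: "Q (v + t *\<^sub>R u) = Q v + t * b v" for v t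
  proof -
    have "Q (v + t *\<^sub>R u) = B v v + t * B v u + t * B u v + t * t * B u u"
      unfolding Q_def by (simp add: bilinear_ladd[OF bil] bilinear_radd[OF bil]
          bilinear_lmul[OF bil] bilinear_rmul[OF bil] algebra_simps)
    then show ?thesis unfolding Q_def using Bvu Buv Buu bu by simp
  qed
  have aexp: "a (v + t *\<^sub>R u) = a v + t" for v t
    using au by (simp add: linear_add[OF la] linear_scale[OF la])
  have bexp: "b (v + t *\<^sub>R u) = b v" for v t
    using bu by (simp add: linear_add[OF lb] linear_scale[OF lb])
  have Rinv: "Q (v + t *\<^sub>R u) - a (v + t *\<^sub>R u) * b (v + t *\<^sub>R u) = Q v - a v * b v" for v t
    unfolding Qexp aexp bexp by (simp add: algebra_simps)
  have Qpf: "Q \<in> poly_fun"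
  proof -
    have "Q v = (\<Sum>i\<in>Basis. inner v i * B i v)" for v
    proof -
      have "Q v = B (\<Sum>i\<in>Basis. inner v i *\<^sub>R i) v" unfolding Q_def euclidean_representation ..
      also have "\<dots> = (\<Sum>i\<in>Basis. B (inner v i *\<^sub>R i) v)"
      proof -
        have l: "linear (\<lambda>y. B y v)" using bil unfolding bilinear_def by blast
        show ?thesis by (rule linear_sum[OF l])
      qed
      also have "\<dots> = (\<Sum>i\<in>Basis. inner v i * B i v)"
        by (simp add: bilinear_lmul[OF bil])
      finally show ?thesis .
    qed
    moreover have "(\<lambda>v. \<Sum>i\<in>Basis. inner v i * B i v) \<in> poly_fun"
    proof (intro pf_sum pf_mult pf_lin finite_Basis)
      fix i :: 'v
      show "linear (\<lambda>v. inner v i)" by (rule bounded_linear.linear[OF bounded_linear_inner_left])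
      show "linear (B i)" using bil unfolding bilinear_def by blast
    qed
    moreover have "Q = (\<lambda>v. \<Sum>i\<in>Basis. inner v i * B i v)" using calculation(1) by (rule ext)
    ultimately show ?thesis by simp
  qed
  have bw0: "b \<alpha> = 1" unfolding b_def using Baa Bab by simp
  have bz0: "b \<gamma> = 0" unfolding b_def using Bga Bgb by simp
  have Qz0: "Q \<gamma> \<noteq> 0" unfolding Q_def using Bgg .
  have qd: "quad Q a b u \<alpha> \<gamma>"
    unfolding quad_def using Rinv by (simp add: Qpf la lb au bu bw0 bz0 Qz0)
  interpret Qd: quad Q a b u \<alpha> \<gamma> by (rule qd)
  have Q0: "Q 0 = 0" unfolding Q_def by (rule bilinear_lzero[OF bil])
  obtain bl where bl: "set bl = (Basis :: 'w set)" "distinct bl"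
    using finite_distinct_list[OF finite_Basis] by blast
  define wd where "wd = DIM('w)"
  have lbl: "length bl = wd" unfolding wd_def using distinct_card[OF bl(2)] bl(1) by simp
  have blB: "bl ! i \<in> Basis" if "i < wd" for i using that lbl bl(1) nth_mem by blast
  have bidx: "\<exists>k<wd. bl ! k = bb" if "bb \<in> Basis" for bb
    using that bl(1) lbl by (metis in_set_conv_nth)
  have innbl: "inner (bl ! i) (bl ! k) = (if i = k then 1 else 0)" if "i < wd" "k < wd" for i k
  proof -
    have "bl ! i = bl ! k \<longleftrightarrow> i = k" using nth_eq_iff_index_eq[OF bl(2)] that lbl by simp
    then show ?thesis using inner_Basis[OF blB[OF that(1)] blB[OF that(2)]] by simp
  qed
  have rwd: "r \<le> wd" using rw unfolding wd_def .
  define Am :: "('v \<Rightarrow> real) mat" where "Am = mat wd r (\<lambda>(i,j). (\<lambda>v. inner (x j v) (bl ! i)))"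
  have Amc: "Am \<in> carrier_mat wd r" unfolding Am_def by simp
  have Amij: "Am $$ (i,j) = (\<lambda>v. inner (x j v) (bl ! i))" if "i < wd" "j < r" for i j
    unfolding Am_def using that by simp
  have rowsel: "map ((!) bl) rs \<in> row_sels r"
    if rs: "distinct rs" "length rs = r" "set rs \<subseteq> {..<wd}" for rs
  proof -
    have "inj_on ((!) bl) (set rs)"
    proof (rule inj_onI)
      fix i k assume "i \<in> set rs" "k \<in> set rs" "bl ! i = bl ! k"
      then show "i = k" using rs(3) lbl nth_eq_iff_index_eq[OF bl(2)] by auto
    qed
    moreover have "set (map ((!) bl) rs) \<subseteq> Basis" using rs(3) blB by auto
    ultimately show ?thesis unfolding row_sels_def using rs by (simp add: distinct_map)
  qed
  have deteval: "det (subm Am rs [0..<r]) v = minor r x (map ((!) bl) rs) v"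
    if rs: "distinct rs" "length rs = r" "set rs \<subseteq> {..<wd}" for rs v
  proof -
    have "map_mat (\<lambda>f. f v) (subm Am rs [0..<r]) = mat r r (\<lambda>(i,j). inner (x j v) (map ((!) bl) rs ! i))"
    proof (rule eq_matI)
      fix i j assume "i < dim_row (mat r r (\<lambda>(i,j). inner (x j v) (map ((!) bl) rs ! i)))"
        "j < dim_col (mat r r (\<lambda>(i,j). inner (x j v) (map ((!) bl) rs ! i)))"
      then have ij: "i < r" "j < r" by simp_all
      then have "rs ! i < wd" using rs nth_mem by blast
      then show "map_mat (\<lambda>f. f v) (subm Am rs [0..<r]) $$ (i, j) =
          mat r r (\<lambda>(i,j). inner (x j v) (map ((!) bl) rs ! i)) $$ (i, j)"
        using ij rs(2) by (simp add: Amij)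
    qed (simp_all add: rs(2))
    then show ?thesis using det_eval[of "subm Am rs [0..<r]" v] minor_det[of r x _ v] by simp
  qed
  have S1S2: "minors_ideal r x \<subseteq> Q_ideal Q"
    if H: "\<And>bs. bs \<in> row_sels r \<Longrightarrow> minor r x bs \<in> Q_ideal Q"
  proof
    fix m assume "m \<in> minors_ideal r x"
    then obtain c where m: "m = (\<lambda>v. \<Sum>bs\<in>row_sels r. c bs v * minor r x bs v)"
      and c: "\<forall>bs\<in>row_sels r. c bs \<in> poly_fun"
      unfolding minors_ideal_def by blast
    show "m \<in> Q_ideal Q" unfolding m
      by (rule Q_ideal_comb[OF row_sels_finite]) (use c H in auto)
  qed
  have mpf: "minor r x bs \<in> poly_fun" if "bs \<in> row_sels r" for bs
    using that polyx unfolding row_sels_def by (intro minor_pf) auto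
  have I12: "minors_ideal r x \<subseteq> Q_ideal Q"
    if H1: "\<forall>v. Q v = 0 \<longrightarrow> (\<exists>a::nat \<Rightarrow> real. (\<exists>i<r. a i \<noteq> 0) \<and> (\<Sum>i<r. a i *\<^sub>R x i v) = 0)"
  proof (rule S1S2)
    fix bs :: "'w list" assume bs: "bs \<in> row_sels r"
    have "\<forall>v. Q v = 0 \<longrightarrow> minor r x bs v = 0"
    proof (intro allI impI)
      fix v assume "Q v = 0"
      then obtain a :: "nat \<Rightarrow> real" where "\<exists>i<r. a i \<noteq> 0" "(\<Sum>i<r. a i *\<^sub>R x i v) = 0"
        using H1 by blast
      then show "minor r x bs v = 0" by (rule minor_zero)
    qed
    then show "minor r x bs \<in> Q_ideal Q" by (rule Qd.vanish[OF mpf[OF bs]])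
  qed
  have minors_van: "minor r x bs v = 0" if H2: "minors_ideal r x \<subseteq> Q_ideal Q" and bs: "bs \<in> row_sels r"
    and v: "Q v = 0" for bs v
  proof -
    have "minor r x bs \<in> Q_ideal Q" using minor_in_ideal[OF bs] H2 by blast
    then show ?thesis using Q_ideal_vanish v by blast
  qed
  have I21: "\<exists>a::nat \<Rightarrow> real. (\<exists>i<r. a i \<noteq> 0) \<and> (\<Sum>i<r. a i *\<^sub>R x i v0) = 0"
    if H2: "minors_ideal r x \<subseteq> Q_ideal Q" and v0: "Q v0 = 0" for v0
  proof -
    have "\<exists>c. (\<forall>j<r. c j \<in> UNIV) \<and> (\<exists>j<r. c j \<notin> {f. f v0 = 0}) \<and>
        (\<forall>i<wd. (\<Sum>j<r. c j * Am $$ (i,j)) \<in> {f. f v0 = 0})"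
    proof (rule GL[OF Amc rwd])
      fix rs assume rs: "distinct rs" "length rs = r" "set rs \<subseteq> {..<wd}"
      show "det (subm Am rs [0..<r]) \<in> {f. f v0 = 0}"
        using deteval[OF rs, of v0] minors_van[OF H2 rowsel[OF rs] v0] by simp
    qed auto
    then obtain c where c1: "\<exists>j<r. c j v0 \<noteq> 0" and c2: "\<forall>i<wd. (\<Sum>j<r. c j * Am $$ (i,j)) v0 = 0"
      by auto
    show ?thesis
    proof (intro exI[of _ "\<lambda>j. c j v0"] conjI)
      show "\<exists>i<r. c i v0 \<noteq> 0" by (rule c1)
      show "(\<Sum>i<r. c i v0 *\<^sub>R x i v0) = 0"
      proof (rule euclidean_eqI)
        fix bb :: 'w assume "bb \<in> Basis"
        then obtain k where k: "k < wd" "bl ! k = bb" using bidx by blast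
        have "inner (\<Sum>i<r. c i v0 *\<^sub>R x i v0) bb = (\<Sum>j<r. c j v0 * inner (x j v0) (bl ! k))"
          unfolding inner_sum_left k(2)[symmetric] by simp
        also have "\<dots> = (\<Sum>j<r. c j * Am $$ (k,j)) v0"
          unfolding sum_eval using k(1) by (simp add: Amij)
        also have "\<dots> = 0" using c2 k(1) by blast
        finally show "inner (\<Sum>i<r. c i v0 *\<^sub>R x i v0) bb = inner 0 bb" by simp
      qed
    qed
  qed
  have I23: "\<exists>c::nat \<Rightarrow> 'v \<Rightarrow> real. (\<forall>i<r. c i \<in> poly_fun) \<and> (\<exists>i<r. c i \<notin> Q_ideal Q) \<and>
                 (\<exists>y::'v \<Rightarrow> 'w. poly_map y \<and> (\<forall>v. (\<Sum>i<r. c i v *\<^sub>R x i v) = Q v *\<^sub>R y v))"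
    if H2: "minors_ideal r x \<subseteq> Q_ideal Q"
  proof -
    let ?P = "{f :: 'v \<Rightarrow> real. \<forall>v. Q v = 0 \<longrightarrow> f v = 0}"
    have "\<exists>c. (\<forall>j<r. c j \<in> poly_fun) \<and> (\<exists>j<r. c j \<notin> ?P) \<and>
        (\<forall>i<wd. (\<Sum>j<r. c j * Am $$ (i,j)) \<in> ?P)"
    proof (rule GL[OF Amc rwd])
      fix rs assume rs: "distinct rs" "length rs = r" "set rs \<subseteq> {..<wd}"
      show "det (subm Am rs [0..<r]) \<in> ?P"
        using deteval[OF rs] minors_van[OF H2 rowsel[OF rs]] by simp
    next
      show "1 \<notin> ?P" using Q0 by auto
    next
      fix i j assume "i < wd" "j < r"
      then show "Am $$ (i,j) \<in> poly_fun" using Amij polyx blB unfolding poly_map_def by simp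
    next
      fix f g :: "'v \<Rightarrow> real" assume "f \<in> poly_fun" "g \<in> poly_fun"
      then show "f + g \<in> poly_fun" "f * g \<in> poly_fun" unfolding fun_ring_simps by auto
    qed (auto simp: fun_ring_simps mone_pf)
    then obtain c where cpf: "\<forall>j<r. c j \<in> poly_fun" and cnot: "\<exists>j<r. c j \<notin> ?P"
      and cP: "\<forall>i<wd. (\<Sum>j<r. c j * Am $$ (i,j)) \<in> ?P" by blast
    define F where "F i v = (\<Sum>j<r. c j v * inner (x j v) (bl ! i))" for i v
    have Fpf: "F i \<in> poly_fun" if "i < wd" for i
      unfolding F_def using cpf polyx blB[OF that] unfolding poly_map_def
      by (intro pf_sum pf_mult) auto
    have Fvan: "\<forall>v. Q v = 0 \<longrightarrow> F i v = 0" if "i < wd" for i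
    proof (intro allI impI)
      fix v assume "Q v = 0"
      then have "(\<Sum>j<r. c j * Am $$ (i,j)) v = 0" using cP that by blast
      then show "F i v = 0" unfolding F_def sum_eval using that by (simp add: Amij)
    qed
    have "\<forall>i\<in>{..<wd}. \<exists>g. g \<in> poly_fun \<and> (\<forall>v. F i v = Q v * g v)"
    proof
      fix i assume "i \<in> {..<wd}"
      then have "F i \<in> Q_ideal Q" using Qd.vanish[OF Fpf Fvan] by simp
      then show "\<exists>g. g \<in> poly_fun \<and> (\<forall>v. F i v = Q v * g v)" by (metis Q_idealE)
    qed
    from bchoice[OF this] obtain G where G: "\<forall>i\<in>{..<wd}. G i \<in> poly_fun \<and> (\<forall>v. F i v = Q v * G i v)"
      by (elim exE)
    define y where "y v = (\<Sum>i<wd. G i v *\<^sub>R bl ! i)" for v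
    have yk: "inner (y v) (bl ! k) = G k v" if "k < wd" for v k
    proof -
      have "inner (y v) (bl ! k) = (\<Sum>i<wd. G i v * (if i = k then 1 else 0))"
        unfolding y_def inner_sum_left using that innbl by simp
      also have "\<dots> = G k v" using that by (simp add: if_distrib sum.delta cong: if_cong)
      finally show ?thesis .
    qed
    show ?thesis
    proof (intro exI[of _ c] exI[of _ y] conjI)
      show "\<forall>i<r. c i \<in> poly_fun" by (rule cpf)
      show "\<exists>i<r. c i \<notin> Q_ideal Q" using cnot Q_ideal_vanish by blast
      show "poly_map y" unfolding poly_map_def
      proof
        fix bb :: 'w assume "bb \<in> Basis"
        then obtain k where k: "k < wd" "bl ! k = bb" using bidx by blast
        have "(\<lambda>v. inner (y v) bb) = G k" using yk[OF k(1)] k(2) by auto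
        then show "(\<lambda>v. inner (y v) bb) \<in> poly_fun" using G k(1) by simp
      qed
      show "\<forall>v. (\<Sum>i<r. c i v *\<^sub>R x i v) = Q v *\<^sub>R y v"
      proof
        fix v
        show "(\<Sum>i<r. c i v *\<^sub>R x i v) = Q v *\<^sub>R y v"
        proof (rule euclidean_eqI)
          fix bb :: 'w assume "bb \<in> Basis"
          then obtain k where k: "k < wd" "bl ! k = bb" using bidx by blast
          have "inner (\<Sum>i<r. c i v *\<^sub>R x i v) bb = F k v"
            unfolding F_def inner_sum_left k(2)[symmetric] by simp
          also have "\<dots> = Q v * G k v" using G k(1) by simp
          also have "\<dots> = inner (Q v *\<^sub>R y v) bb" using yk[OF k(1)] k(2) by simp
          finally show "inner (\<Sum>i<r. c i v *\<^sub>R x i v) bb = inner (Q v *\<^sub>R y v) bb" .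
        qed
      qed
    qed
  qed
  have I32: "minors_ideal r x \<subseteq> Q_ideal Q"
    if H3: "\<exists>c::nat \<Rightarrow> 'v \<Rightarrow> real. (\<forall>i<r. c i \<in> poly_fun) \<and> (\<exists>i<r. c i \<notin> Q_ideal Q) \<and>
                 (\<exists>y::'v \<Rightarrow> 'w. poly_map y \<and> (\<forall>v. (\<Sum>i<r. c i v *\<^sub>R x i v) = Q v *\<^sub>R y v))"
  proof -
    from H3 obtain c :: "nat \<Rightarrow> 'v \<Rightarrow> real" and y :: "'v \<Rightarrow> 'w" and i0 where
      cpf: "\<forall>i<r. c i \<in> poly_fun" and i0: "i0 < r" "c i0 \<notin> Q_ideal Q"
      and eq: "\<forall>v. (\<Sum>i<r. c i v *\<^sub>R x i v) = Q v *\<^sub>R y v" by blast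
    show ?thesis
    proof (rule S1S2)
      fix bs :: "'w list" assume bs: "bs \<in> row_sels r"
      have "\<forall>v. Q v = 0 \<longrightarrow> minor r x bs v * c i0 v = 0"
      proof (intro allI impI)
        fix v assume Qv: "Q v = 0"
        show "minor r x bs v * c i0 v = 0"
        proof (cases "c i0 v = 0")
          case False
          have "minor r x bs v = 0"
          proof (rule minor_zero[of r "\<lambda>j. c j v"])
            show "\<exists>i<r. c i v \<noteq> 0" using False i0(1) by blast
            show "(\<Sum>i<r. c i v *\<^sub>R x i v) = 0" using eq Qv by simp
          qed
          then show ?thesis by simp
        qed simp
      qed
      then have "minor r x bs \<in> Q_ideal Q \<or> c i0 \<in> Q_ideal Q"
        by (rule Qd.prime[OF mpf[OF bs] cpf[rule_format, OF i0(1)]])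
      then show "minor r x bs \<in> Q_ideal Q" using i0(2) by blast
    qed
  qed
  show ?thesis
  proof (intro conjI iffI)
    show "minors_ideal r x \<subseteq> Q_ideal Q"
      if "\<forall>v. Q v = 0 \<longrightarrow> (\<exists>a::nat \<Rightarrow> real. (\<exists>i<r. a i \<noteq> 0) \<and> (\<Sum>i<r. a i *\<^sub>R x i v) = 0)"
      using I12[OF that] .
    show "\<forall>v. Q v = 0 \<longrightarrow> (\<exists>a::nat \<Rightarrow> real. (\<exists>i<r. a i \<noteq> 0) \<and> (\<Sum>i<r. a i *\<^sub>R x i v) = 0)"
      if "minors_ideal r x \<subseteq> Q_ideal Q" using I21[OF that] by blast
  qed (fact I23 I32)+
qed

end
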